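(* Let $(\lambda,\mu,\mu')$ be an admissible triplet of type 1, and let $\mu^\diamond,\mu'^\diamond$ be the associated weights. Then $\lambda+\mu'^\diamond\in P_+$; equivalently, the triplet $(\lambda,\mu'^\diamond,\mu^\diamond)$ is admissible.
   Context: Type $D_n$ weights are $(\lambda_1,\dots,\lambda_n)$; $\langle\lambda,\alpha_j^\vee\rangle=\lambda_j-\lambda_{j+1}$ ($j<n$), $\langle\lambda,\alpha_n^\vee\rangle=\lambda_{n-1}+\lambda_n$; $P_+=\{\lambda_j\in\frac12\mathbb Z,\lambda_j-\lambda_k\in\mathbb Z,\lambda_1\ge\dots\ge\lambda_n,\lambda_{n-1}+\lambda_n\ge0\}$; $P[S]=\{(\pm\frac12,\dots,\pm\frac12)\}$. $\Delta^k$ is the set of sums $\mu_1+\dots+\mu_k$ over $(\mu_1,\dots,\mu_k)\in P[S]^k$ with all partial sums in $P_+$ ($\Delta^0=\{0\}$). A triplet $(\lambda,\mu,\mu')$ is admissible if $\lambda\in\Delta^k$ for some $k\ge0$, $\mu,\mu'\in P[S]$, $\lambda+\mu,\lambda+\mu+\mu'\in P_+$. A free interval is a subset $\mathrm{Fr}\subset\{1,\dots,n\}$, maximal by inclusion, with $\lambda$ constant on $\mathrm{Fr}$ and $\mu_j\mu'_j<0$ for $j\in\mathrm{Fr}$. Weights $\mu^*,\mu'^*$: equal to $\mu,\mu'$ outside free intervals; on each free interval, with $b=|\{j\in\mathrm{Fr}:\mu'_j=+\frac12\}|$, $\mu'^*_j=+\frac12$ on the $b$ smallest elements of $\mathrm{Fr}$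 and $-\frac12$ on the rest, $\mu^*_j=-\mu'^*_j$. The triplet is of type 1 if $\lambda_{n-1}+\lambda_n+\mu'^*_{n-1}+\mu'^*_n<0$ and $n-1$, $n$ lie in two different free intervals. In that case let $a$ be the number of elements $j$ of the free interval containing $n-1$ with $\mu'_j=-\frac12$; then $\mu'^\diamond$ is obtained from $\mu'^*$ by setting the coordinates $n$ and $n-a$ equal to $+\frac12$, and $\mu^\diamond$ from $\mu^*$ by setting the coordinates $n$ and $n-a$ equal to $-\frac12$ (in $\mu'^*$ these coordinates are $-\frac12$ and in $\mu^*$ they are $+\frac12$, so $\mu^\diamond+\mu'^\diamond=\mu+\mu'$). *)

theory Defs
  imports Main "HOL-Library.Function_Algebras" Complex_Main
begin

text \<open>Weights of type D_n are functions nat => real, with coordinates indexed by 1..n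
  and value 0 outside {1..n}.\<close>

definition is_weight :: "nat \<Rightarrow> (nat \<Rightarrow> real) \<Rightarrow> bool" where
  "is_weight n l \<longleftrightarrow> (\<forall>j. j \<notin> {1..n} \<longrightarrow> l j = 0)"

definition Pplus :: "nat \<Rightarrow> (nat \<Rightarrow> real) set" where
  "Pplus n = {l. is_weight n l
      \<and> (\<forall>j\<in>{1..n}. 2 * l j \<in> \<int>)
      \<and> (\<forall>j\<in>{1..n}. \<forall>k\<in>{1..n}. l j - l k \<in> \<int>)
      \<and> (\<forall>j. 1 \<le> j \<and> j < n \<longrightarrow> l (j + 1) \<le> l j)
      \<and> l (n - 1) + l n \<ge> 0}"

definition PS :: "nat \<Rightarrow> (nat \<Rightarrow> real) set" where
  "PS n = {m. is_weight n m \<and> (\<forall>j\<in>{1..n}. m j = 1/2 \<or> m j = -1/2)}"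

definition Delta :: "nat \<Rightarrow> nat \<Rightarrow> (nat \<Rightarrow> real) set" where
  "Delta n k = {l. \<exists>ms :: (nat \<Rightarrow> real) list. length ms = k
      \<and> (\<forall>m\<in>set ms. m \<in> PS n)
      \<and> (\<forall>i\<in>{1..k}. (\<Sum>t<i. ms ! t) \<in> Pplus n)
      \<and> l = (\<Sum>t<k. ms ! t)}"

definition admissible :: "nat \<Rightarrow> (nat \<Rightarrow> real) \<Rightarrow> (nat \<Rightarrow> real) \<Rightarrow> (nat \<Rightarrow> real) \<Rightarrow> bool" where
  "admissible n l m m' \<longleftrightarrow> (\<exists>k. l \<in> Delta n k) \<and> m \<in> PS n \<and> m' \<in> PS n
      \<and> l + m \<in> Pplus n \<and> l + m + m' \<in> Pplus n"

definition free_cand :: "nat \<Rightarrow> (nat \<Rightarrow> real) \<Rightarrow> (nat \<Rightarrow> real) \<Rightarrow> (nat \<Rightarrow> real) \<Rightarrow> nat set \<Rightarrow> bool" where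
  "free_cand n l m m' Fr \<longleftrightarrow> Fr \<subseteq> {1..n} \<and> (\<forall>i\<in>Fr. \<forall>j\<in>Fr. l i = l j)
      \<and> (\<forall>j\<in>Fr. m j * m' j < 0)"

definition free_interval :: "nat \<Rightarrow> (nat \<Rightarrow> real) \<Rightarrow> (nat \<Rightarrow> real) \<Rightarrow> (nat \<Rightarrow> real) \<Rightarrow> nat set \<Rightarrow> bool" where
  "free_interval n l m m' Fr \<longleftrightarrow> free_cand n l m m' Fr
      \<and> (\<forall>G. free_cand n l m m' G \<and> Fr \<subseteq> G \<longrightarrow> G = Fr)"

text \<open>The free interval containing j (meaningful when such exists; free intervals are disjoint).\<close>
definition fr_of :: "nat \<Rightarrow> (nat \<Rightarrow> real) \<Rightarrow> (nat \<Rightarrow> real) \<Rightarrow> (nat \<Rightarrow> real) \<Rightarrow> nat \<Rightarrow> nat set" where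
  "fr_of n l m m' j = (SOME Fr. free_interval n l m m' Fr \<and> j \<in> Fr)"

definition mu'_star :: "nat \<Rightarrow> (nat \<Rightarrow> real) \<Rightarrow> (nat \<Rightarrow> real) \<Rightarrow> (nat \<Rightarrow> real) \<Rightarrow> nat \<Rightarrow> real" where
  "mu'_star n l m m' j =
     (if \<exists>Fr. free_interval n l m m' Fr \<and> j \<in> Fr then
        (let Fr = fr_of n l m m' j; b = card {i\<in>Fr. m' i = 1/2}
         in if card {i\<in>Fr. i < j} < b then 1/2 else -1/2)
      else m' j)"

definition mu_star :: "nat \<Rightarrow> (nat \<Rightarrow> real) \<Rightarrow> (nat \<Rightarrow> real) \<Rightarrow> (nat \<Rightarrow> real) \<Rightarrow> nat \<Rightarrow> real" where
  "mu_star n l m m' j =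
     (if \<exists>Fr. free_interval n l m m' Fr \<and> j \<in> Fr then - mu'_star n l m m' j else m j)"

definition type1 :: "nat \<Rightarrow> (nat \<Rightarrow> real) \<Rightarrow> (nat \<Rightarrow> real) \<Rightarrow> (nat \<Rightarrow> real) \<Rightarrow> bool" where
  "type1 n l m m' \<longleftrightarrow>
     l (n - 1) + l n + mu'_star n l m m' (n - 1) + mu'_star n l m m' n < 0
     \<and> (\<exists>F G. free_interval n l m m' F \<and> free_interval n l m m' G \<and> F \<noteq> G
              \<and> n - 1 \<in> F \<and> n \<in> G)"

definition a_num :: "nat \<Rightarrow> (nat \<Rightarrow> real) \<Rightarrow> (nat \<Rightarrow> real) \<Rightarrow> (nat \<Rightarrow> real) \<Rightarrow> nat" where
  "a_num n l m m' = card {j \<in> fr_of n l m m' (n - 1). m' j = -1/2}"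

definition mu'_diamond :: "nat \<Rightarrow> (nat \<Rightarrow> real) \<Rightarrow> (nat \<Rightarrow> real) \<Rightarrow> (nat \<Rightarrow> real) \<Rightarrow> nat \<Rightarrow> real" where
  "mu'_diamond n l m m' = (mu'_star n l m m')(n := 1/2, n - a_num n l m m' := 1/2)"

definition mu_diamond :: "nat \<Rightarrow> (nat \<Rightarrow> real) \<Rightarrow> (nat \<Rightarrow> real) \<Rightarrow> (nat \<Rightarrow> real) \<Rightarrow> nat \<Rightarrow> real" where
  "mu_diamond n l m m' = (mu_star n l m m')(n := -1/2, n - a_num n l m m' := -1/2)"

end

theory Submission
  imports Defs
begin

definition FIs :: "nat \<Rightarrow> (nat \<Rightarrow> real) \<Rightarrow> (nat \<Rightarrow> real) \<Rightarrow> (nat \<Rightarrow> real) \<Rightarrow> nat \<Rightarrow> nat set" where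
  "FIs n l m m' j = {i\<in>{1..n}. l i = l j \<and> m i * m' i < 0}"

lemma fi_unique:
  assumes "free_interval n l m m' H" "j \<in> H"
  shows "H = FIs n l m m' j"
proof -
  have c: "free_cand n l m m' H" using assms(1) free_interval_def by blast
  have sub: "H \<subseteq> FIs n l m m' j"
  proof
    fix i assume "i \<in> H"
    then show "i \<in> FIs n l m m' j"
      using c assms(2) unfolding free_cand_def FIs_def by blast
  qed
  have "free_cand n l m m' (FIs n l m m' j)"
    unfolding free_cand_def FIs_def by auto
  then show ?thesis using assms(1) sub unfolding free_interval_def by blast
qed

lemma fi_is:
  assumes "j \<in> {1..n}" "m j * m' j < 0"
  shows "free_interval n l m m' (FIs n l m m' j) \<and> j \<in> FIs n l m m' j"
proof -
  have "free_cand n l m m' (FIs n l m m' j)"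
    unfolding free_cand_def FIs_def by auto
  moreover have "G = FIs n l m m' j" if "free_cand n l m m' G" "FIs n l m m' j \<subseteq> G" for G
  proof -
    have "j \<in> G" using that(2) assms unfolding FIs_def by auto
    have "G \<subseteq> FIs n l m m' j"
    proof
      fix i assume "i \<in> G"
      then show "i \<in> FIs n l m m' j"
        using that(1) \<open>j \<in> G\<close> unfolding free_cand_def FIs_def by blast
    qed
    then show ?thesis using that(2) by blast
  qed
  ultimately show ?thesis using assms unfolding free_interval_def FIs_def by auto
qed

lemma ex_fi:
  "(\<exists>Fr. free_interval n l m m' Fr \<and> j \<in> Fr) \<longleftrightarrow> j \<in> {1..n} \<and> m j * m' j < 0"
proof
  assume "\<exists>Fr. free_interval n l m m' Fr \<and> j \<in> Fr"
  then obtain Fr where "free_interval n l m m' Fr" "j \<in> Fr" by blast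
  then show "j \<in> {1..n} \<and> m j * m' j < 0" unfolding free_interval_def free_cand_def by blast
next
  assume "j \<in> {1..n} \<and> m j * m' j < 0"
  then show "\<exists>Fr. free_interval n l m m' Fr \<and> j \<in> Fr" using fi_is by blast
qed

lemma fr_of_eq:
  assumes "j \<in> {1..n}" "m j * m' j < 0"
  shows "fr_of n l m m' j = FIs n l m m' j"
  unfolding fr_of_def
  by (rule someI2[of _ "FIs n l m m' j"]) (use fi_is[of j n m m' l, OF assms] fi_unique in auto)

lemma star_eq:
  "mu'_star n l m m' j = (if j \<in> {1..n} \<and> m j * m' j < 0 then
     (if card {i\<in>FIs n l m m' j. i < j} < card {i\<in>FIs n l m m' j. m' i = 1/2} then 1/2 else -1/2)
     else m' j)"
  unfolding mu'_star_def ex_fi by (auto simp: fr_of_eq Let_def)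

lemma mstar_eq:
  "mu_star n l m m' j = (if j \<in> {1..n} \<and> m j * m' j < 0 then - mu'_star n l m m' j else m j)"
  unfolding mu_star_def ex_fi by simp

lemma PS_val: "m \<in> PS n \<Longrightarrow> j \<in> {1..n} \<Longrightarrow> m j = 1/2 \<or> m j = -1/2"
  unfolding PS_def by auto

lemma PS_out: "m \<in> PS n \<Longrightarrow> j \<notin> {1..n} \<Longrightarrow> m j = 0"
  unfolding PS_def is_weight_def by auto

lemma star_val:
  assumes "m' \<in> PS n" "j \<in> {1..n}"
  shows "mu'_star n l m m' j = 1/2 \<or> mu'_star n l m m' j = -1/2"
  using PS_val[OF assms] by (simp add: star_eq)

lemma star_out:
  assumes "m' \<in> PS n" "j \<notin> {1..n}"
  shows "mu'_star n l m m' j = 0"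
  using PS_out[OF assms] assms(2) by (simp add: star_eq)

lemma mono_trans:
  fixes f :: "nat \<Rightarrow> real"
  assumes "\<forall>j. 1 \<le> j \<and> j < n \<longrightarrow> f (j + 1) \<le> f j" "1 \<le> i" "i \<le> j" "j \<le> n"
  shows "f j \<le> f i"
  using assms(3,4)
proof (induction j)
  case 0 then show ?case by simp
next
  case (Suc j)
  show ?case
  proof (cases "i = Suc j")
    case False
    then have "i \<le> j" using Suc by simp
    then have "f j \<le> f i" using Suc by simp
    moreover have "f (j+1) \<le> f j" using assms(1,2) \<open>i \<le> j\<close> Suc by simp
    ultimately show ?thesis by simp
  qed simp
qed

lemma half_prod:
  fixes x y :: real
  assumes "x = 1/2 \<or> x = -1/2" "y = 1/2 \<or> y = -1/2"
  shows "x * y < 0 \<longleftrightarrow> x + y = 0" "\<not> x * y < 0 \<Longrightarrow> x = y"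
  using assms by (elim disjE; hypsubst; simp)+

lemma free_iff:
  assumes "m \<in> PS n" "m' \<in> PS n" "j \<in> {1..n}"
  shows "m j * m' j < 0 \<longleftrightarrow> m j + m' j = 0"
  using half_prod(1)[OF PS_val[OF assms(1,3)] PS_val[OF assms(2,3)]] .

lemma nonfree_eq:
  assumes "m \<in> PS n" "m' \<in> PS n" "j \<in> {1..n}" "\<not> m j * m' j < 0"
  shows "m j = m' j"
  using half_prod(2)[OF PS_val[OF assms(1,3)] PS_val[OF assms(2,3)] assms(4)] .

lemma star_mono:
  assumes mP: "m \<in> PS n" and m'P: "m' \<in> PS n" and j: "1 \<le> j" "j < n" and eq: "l j = l (j+1)"
    and ms: "m (j+1) + m' (j+1) \<le> m j + m' j" and mm: "m (j+1) \<le> m j"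
  shows "mu'_star n l m m' (j+1) \<le> mu'_star n l m m' j"
proof -
  have j1: "j \<in> {1..n}" "j+1 \<in> {1..n}" using j by auto
  have FF: "FIs n l m m' (j+1) = FIs n l m m' j" unfolding FIs_def using eq by simp
  have cc: "card {i\<in>FIs n l m m' j. i < j} \<le> card {i\<in>FIs n l m m' j. i < j+1}"
    by (rule card_mono) (auto simp: FIs_def)
  have s1: "mu'_star n l m m' j = 1/2 \<or> mu'_star n l m m' j = -1/2" using star_val[OF m'P j1(1)] .
  have s2: "mu'_star n l m m' (j+1) = 1/2 \<or> mu'_star n l m m' (j+1) = -1/2" using star_val[OF m'P j1(2)] .
  have v1: "m' j = 1/2 \<or> m' j = -1/2" using PS_val[OF m'P j1(1)] .
  have v2: "m' (j+1) = 1/2 \<or> m' (j+1) = -1/2" using PS_val[OF m'P j1(2)] .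
  show ?thesis
  proof (cases "m j * m' j < 0")
    case fj: True
    then have z: "m j + m' j = 0" using free_iff[OF mP m'P j1(1)] by simp
    show ?thesis
    proof (cases "m (j+1) * m' (j+1) < 0")
      case True
      let ?B = "card {i\<in>FIs n l m m' j. m' i = 1/2}"
      have e1: "mu'_star n l m m' j = (if card {i\<in>FIs n l m m' j. i < j} < ?B then 1/2 else -1/2)"
        using fj j1 by (simp add: star_eq)
      have e2: "mu'_star n l m m' (j+1) = (if card {i\<in>FIs n l m m' j. i < j+1} < ?B then 1/2 else -1/2)"
        using True j1 by (simp only: star_eq FF) simp
      show ?thesis using e1 e2 cc by auto
    next
      case False
      have "m (j+1) = m' (j+1)" using nonfree_eq[OF mP m'P j1(2) False] .
      then have "m' (j+1) \<le> 0" using z ms by simp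
      then have "m' (j+1) = -1/2" using v2 by auto
      moreover have "mu'_star n l m m' (j+1) = m' (j+1)" using False by (simp add: star_eq)
      ultimately show ?thesis using s1 by auto
    qed
  next
    case nfj: False
    have e: "m j = m' j" using nonfree_eq[OF mP m'P j1(1) nfj] .
    have sj: "mu'_star n l m m' j = m' j" using nfj by (simp add: star_eq)
    show ?thesis
    proof (cases "m (j+1) * m' (j+1) < 0")
      case True
      then have "m (j+1) + m' (j+1) = 0" using free_iff[OF mP m'P j1(2)] by simp
      then have "0 \<le> m' j" using e ms by simp
      then have "m' j = 1/2" using v1 by auto
      then show ?thesis using sj s2 by auto
    next
      case False
      have "m (j+1) = m' (j+1)" using nonfree_eq[OF mP m'P j1(2) False] .
      moreover have "mu'_star n l m m' (j+1) = m' (j+1)" using False by (simp add: star_eq)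
      ultimately show ?thesis using sj e mm by simp
    qed
  qed
qed

lemma int_pos_ge1:
  fixes x :: real
  assumes "x \<in> \<int>" "0 < x" shows "1 \<le> x"
proof -
  obtain z where "x = of_int z" using assms(1) Ints_cases by blast
  then show ?thesis using assms(2) by simp
qed

lemma int_01:
  fixes x :: real
  assumes "x \<in> \<int>" "0 \<le> x" "x < 1" shows "x = 0"
proof -
  obtain z where "x = of_int z" using assms(1) Ints_cases by blast
  then show ?thesis using assms(2,3) by simp
qed

theorem proposition6p5:
  fixes n :: nat and l m m' :: "nat \<Rightarrow> real"
  assumes "n \<ge> 2"
    and "admissible n l m m'"
    and "type1 n l m m'"
  shows "l + mu'_diamond n l m m' \<in> Pplus n
     \<and> admissible n l (mu'_diamond n l m m') (mu_diamond n l m m')"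
proof -
  let ?S = "mu'_star n l m m'"
  let ?D = "mu'_diamond n l m m'"
  let ?Dm = "mu_diamond n l m m'"
  let ?Ms = "mu_star n l m m'"
  from assms(2) obtain k where lD: "l \<in> Delta n k" and mP: "m \<in> PS n" and m'P: "m' \<in> PS n"
    and lm: "l + m \<in> Pplus n" and lmm: "l + m + m' \<in> Pplus n"
    unfolding admissible_def by blast
  have lP: "l \<in> Pplus n"
  proof (cases "k = 0")
    case True
    then have "l = 0" using lD unfolding Delta_def by auto
    then show ?thesis unfolding Pplus_def is_weight_def by simp
  next
    case False
    then obtain ms where "\<forall>i\<in>{1..k}. (\<Sum>t<i. ms!t) \<in> Pplus n" "l = (\<Sum>t<k. ms!t)"
      using lD unfolding Delta_def by blast
    then show ?thesis using False by auto
  qed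
  have lw: "is_weight n l" and l2: "\<forall>j\<in>{1..n}. 2 * l j \<in> \<int>"
    and ldiff: "\<forall>j\<in>{1..n}. \<forall>k\<in>{1..n}. l j - l k \<in> \<int>"
    and lmono: "\<forall>j. 1 \<le> j \<and> j < n \<longrightarrow> l (j+1) \<le> l j" and lsum: "l (n-1) + l n \<ge> 0"
    using lP unfolding Pplus_def by auto
  have smono: "\<forall>j. 1 \<le> j \<and> j < n \<longrightarrow> l (j+1) + m (j+1) + m' (j+1) \<le> l j + m j + m' j"
    using lmm unfolding Pplus_def by auto
  from assms(3) obtain F G where tsum: "l (n-1) + l n + ?S (n-1) + ?S n < 0"
    and F: "free_interval n l m m' F" and G: "free_interval n l m m' G" and FG: "F \<noteq> G"
    and n1F: "n-1 \<in> F" and nG: "n \<in> G"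
    unfolding type1_def by blast
  have n1: "n-1 \<in> {1..n}" "n \<in> {1..n}" using assms(1) by auto
  have fr1: "m (n-1) * m' (n-1) < 0" using F n1F unfolding free_interval_def free_cand_def by blast
  have frn: "m n * m' n < 0" using G nG unfolding free_interval_def free_cand_def by blast
  have lneq: "l (n-1) \<noteq> l n"
  proof
    assume e: "l (n-1) = l n"
    have "F = FIs n l m m' (n-1)" using fi_unique F n1F by blast
    moreover have "G = FIs n l m m' n" using fi_unique G nG by blast
    moreover have "FIs n l m m' (n-1) = FIs n l m m' n" unfolding FIs_def using e by simp
    ultimately show False using FG by simp
  qed
  have "l (n-1+1) \<le> l (n-1)" using lmono[rule_format, of "n-1"] assms(1) by simp
  then have lgt: "l n < l (n-1)" using lneq assms(1) by simp
  have int: "l (n-1) + l n \<in> \<int>"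
  proof -
    have "2 * l n \<in> \<int>" "l (n-1) - l n \<in> \<int>" using l2 ldiff n1 by auto
    moreover have "l (n-1) + l n = 2 * l n + (l (n-1) - l n)" by simp
    ultimately show ?thesis by (metis Ints_add)
  qed
  have Sv1: "?S (n-1) = 1/2 \<or> ?S (n-1) = -1/2" using star_val[OF m'P n1(1)] .
  have Svn: "?S n = 1/2 \<or> ?S n = -1/2" using star_val[OF m'P n1(2)] .
  have "l (n-1) + l n < 1" using tsum Sv1 Svn by auto
  then have l0: "l (n-1) + l n = 0" using int_01 int lsum by blast
  have S1: "?S (n-1) = -1/2" using tsum l0 Sv1 Svn by auto
  define FF where "FF = FIs n l m m' (n-1)"
  have frof: "fr_of n l m m' (n-1) = FF" using fr_of_eq n1 fr1 FF_def by blast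
  define a where "a = card {i\<in>FF. m' i = -1/2}"
  define b where "b = card {i\<in>FF. m' i = 1/2}"
  have anum: "a_num n l m m' = a" unfolding a_num_def frof a_def ..
  have FFsub: "FF \<subseteq> {1..n-1}"
  proof
    fix i assume "i \<in> FF"
    then have "i \<in> {1..n}" "l i = l (n-1)" unfolding FF_def FIs_def by auto
    then show "i \<in> {1..n-1}" using lneq by (cases "i = n") auto
  qed
  have finFF: "finite FF" using FFsub finite_subset by blast
  have n1FF: "n-1 \<in> FF" unfolding FF_def FIs_def using n1 fr1 by simp
  have FFint: "j \<in> FF" if i: "i \<in> FF" "i \<le> j" "j \<le> n-1" for i j
  proof -
    have i1: "1 \<le> i" "i \<in> {1..n}" "l i = l (n-1)" "m i * m' i < 0" using i FFsub unfolding FF_def FIs_def by auto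
    have j1: "j \<in> {1..n}" using i1 i by auto
    have "l j \<le> l i" by (rule mono_trans[of n]) (use lmono i1 i in auto)
    moreover have "l (n-1) \<le> l j" by (rule mono_trans[of n]) (use lmono i1 i in auto)
    ultimately have lj: "l j = l (n-1)" using i1 by simp
    have "(\<lambda>j. l j + m j + m' j) j \<le> (\<lambda>j. l j + m j + m' j) i"
      by (rule mono_trans[of n]) (use smono i1 i in auto)
    moreover have "(\<lambda>j. l j + m j + m' j) (n-1) \<le> (\<lambda>j. l j + m j + m' j) j"
      by (rule mono_trans[of n]) (use smono i1 i in auto)
    moreover have "m i + m' i = 0" using free_iff[OF mP m'P i1(2)] i1 by simp
    moreover have "m (n-1) + m' (n-1) = 0" using free_iff[OF mP m'P n1(1)] fr1 by simp
    ultimately have "m j + m' j = 0" using lj i1 by simp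
    then have "m j * m' j < 0" using free_iff[OF mP m'P j1] by simp
    then show ?thesis unfolding FF_def FIs_def using j1 lj by simp
  qed
  define p where "p = Min FF"
  have pF: "p \<in> FF" unfolding p_def using finFF n1FF Min_in by blast
  have FFeq: "FF = {p..n-1}"
  proof
    show "FF \<subseteq> {p..n-1}" using FFsub finFF p_def by auto
    show "{p..n-1} \<subseteq> FF" using FFint pF by auto
  qed
  have p1: "1 \<le> p" "p \<le> n-1" using pF FFsub by auto
  have cardFF: "card FF = a + b"
  proof -
    have "\<forall>x\<in>FF. m' x = 1/2 \<or> m' x = -1/2"
      using PS_val[OF m'P] FFsub by fastforce
    then have "FF = {i\<in>FF. m' i = -1/2} \<union> {i\<in>FF. m' i = 1/2}"
      by blast
    moreover have "card ({i\<in>FF. m' i = -1/2} \<union> {i\<in>FF. m' i = 1/2}) = a + b"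
      unfolding a_def b_def by (rule card_Un_disjoint) (use finFF in auto)
    ultimately show ?thesis by simp
  qed
  have cardFF2: "card FF = n - p" unfolding FFeq using assms(1) by simp
  have "\<not> card {i\<in>FF. i < n-1} < b"
    using S1 n1 fr1 unfolding star_eq FF_def b_def by (auto split: if_splits)
  moreover have "{i\<in>FF. i < n-1} = {p..<n-1}" unfolding FFeq by auto
  ultimately have "b \<le> n - 1 - p" by simp
  then have a1: "1 \<le> a" using cardFF cardFF2 p1 by simp
  define q where "q = n - a"
  have qpb: "q = p + b" using cardFF cardFF2 p1 a1 q_def by simp
  have qF: "q \<in> FF" unfolding FFeq using qpb a1 cardFF cardFF2 p1 q_def by auto
  have "q \<in> {1..n-1}" using qF FFsub by blast
  then have q1: "q \<in> {1..n}" "q \<noteq> n" using assms(1) by auto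
  have Deq: "?D = ?S(n := 1/2, q := 1/2)" unfolding mu'_diamond_def anum q_def ..
  have Dmeq: "?Dm = ?Ms(n := -1/2, q := -1/2)" unfolding mu_diamond_def anum q_def ..
  have Sval: "?S j = 1/2 \<or> ?S j = -1/2" if "j \<in> {1..n}" for j
    using star_val[OF m'P that] by blast
  have Sout: "?S j = 0" if "j \<notin> {1..n}" for j
    using star_out[OF m'P that] by blast
  have Dval: "?D j = 1/2 \<or> ?D j = -1/2" if "j \<in> {1..n}" for j
    using Sval[OF that] unfolding Deq by auto
  have Dout: "?D j = 0" if "j \<notin> {1..n}" for j
    using Sout[OF that] q1 n1 that unfolding Deq by auto
  have DP: "?D \<in> PS n" unfolding PS_def is_weight_def using Dval Dout by auto
  have Msval: "?Ms j = 1/2 \<or> ?Ms j = -1/2" if "j \<in> {1..n}" for j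
    using Sval[OF that] PS_val[OF mP that] unfolding mstar_eq by (cases "m j * m' j < 0") auto
  have Msout: "?Ms j = 0" if "j \<notin> {1..n}" for j
    using PS_out[OF mP that] that unfolding mstar_eq by auto
  have DmP: "?Dm \<in> PS n" unfolding PS_def is_weight_def Dmeq
    using Msval Msout q1 n1 by auto
  have sumeq: "l + ?D + ?Dm = l + m + m'"
  proof
    fix j
    have "?D j + ?Dm j = m j + m' j"
    proof (cases "j = q \<or> j = n")
      case True
      then have "j \<in> {1..n}" "m j * m' j < 0" using q1 n1 frn qF unfolding FF_def FIs_def by auto
      then have "m j + m' j = 0" using free_iff[OF mP m'P] by blast
      then show ?thesis using True q1 unfolding Deq Dmeq by auto
    next
      case False
      then have "?D j + ?Dm j = ?S j + ?Ms j" unfolding Deq Dmeq by simp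
      also have "\<dots> = m j + m' j"
      proof (cases "j \<in> {1..n} \<and> m j * m' j < 0")
        case True
        then have "m j + m' j = 0" using free_iff[OF mP m'P] by blast
        then show ?thesis using True unfolding mstar_eq by simp
      next
        case False
        have "?Ms j = m j" unfolding mstar_eq by (simp only: False if_False)
        moreover have "?S j = m' j" unfolding star_eq by (simp only: False if_False)
        ultimately show ?thesis by simp
      qed
      finally show ?thesis .
    qed
    then show "(l + ?D + ?Dm) j = (l + m + m') j" by simp
  qed
  have goal1: "l + ?D \<in> Pplus n"
  proof -
    have w: "is_weight n (l + ?D)" using lw Dout unfolding is_weight_def by simp
    have h: "\<forall>j\<in>{1..n}. 2 * (l + ?D) j \<in> \<int>"
    proof
      fix j assume j: "j \<in> {1..n}"
      have "2 * ?D j = 1 \<or> 2 * ?D j = -1" using Dval[OF j] by auto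
      then have "2 * ?D j \<in> \<int>" by (metis Ints_1 Ints_minus)
      then show "2 * (l + ?D) j \<in> \<int>" using l2 j by (simp add: distrib_left)
    qed
    have d: "\<forall>j\<in>{1..n}. \<forall>k\<in>{1..n}. (l + ?D) j - (l + ?D) k \<in> \<int>"
    proof (intro ballI)
      fix j k assume j: "j \<in> {1..n}" and k: "k \<in> {1..n}"
      have "?D j - ?D k = 0 \<or> ?D j - ?D k = 1 \<or> ?D j - ?D k = -1" using Dval[OF j] Dval[OF k] by auto
      then have "?D j - ?D k \<in> \<int>" by (metis Ints_0 Ints_1 Ints_minus)
      moreover have "(l + ?D) j - (l + ?D) k = (l j - l k) + (?D j - ?D k)" by simp
      ultimately show "(l + ?D) j - (l + ?D) k \<in> \<int>" using ldiff j k by (metis Ints_add)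
    qed
    have mo: "\<forall>j. 1 \<le> j \<and> j < n \<longrightarrow> (l + ?D) (j + 1) \<le> (l + ?D) j"
    proof (intro allI impI)
      fix j assume j: "1 \<le> j \<and> j < n"
      have j1: "j \<in> {1..n}" "j+1 \<in> {1..n}" using j by auto
      have le: "l (j+1) \<le> l j" using lmono j by blast
      show "(l + ?D) (j + 1) \<le> (l + ?D) j"
      proof (cases "l (j+1) < l j")
        case True
        have "l j - l (j+1) \<in> \<int>" using ldiff j1 by blast
        then have "1 \<le> l j - l (j+1)" using int_pos_ge1 True by simp
        then show ?thesis using Dval[OF j1(1)] Dval[OF j1(2)] by auto
      next
        case False
        then have eq: "l j = l (j+1)" using le by simp
        have jn: "j + 1 \<noteq> n" using eq lneq by (metis add_diff_cancel_right')
        show ?thesis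
        proof (cases "j + 1 = q")
          case True
          have jq: "j \<noteq> q" "j \<noteq> n" using True j by auto
          have Dj: "?D (j+1) = 1/2" using True unfolding Deq by simp
          have "?S j = 1/2"
          proof (cases "j \<in> FF")
            case True
            have fj: "m j * m' j < 0" and lj: "l j = l (n-1)" using True unfolding FF_def FIs_def by auto
            have FIj: "FIs n l m m' j = FF" unfolding FF_def FIs_def using lj by simp
            have "{i\<in>FF. i < j} = {p..<j}" unfolding FFeq using j by auto
            then have cj: "card {i\<in>FF. i < j} = j - p" by simp
            have "p \<le> j" using True finFF p_def by simp
            then have "j - p < b" using \<open>j+1 = q\<close> qpb by linarith
            then have "card {i\<in>FF. i < j} < b" using cj by simp
            then show ?thesis unfolding star_eq FIj b_def[symmetric] using j1 fj by simp
          next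
            case False
            have lj: "l j = l (n-1)" using eq True qF unfolding FF_def FIs_def by auto
            have nf: "\<not> m j * m' j < 0" using False lj j1 unfolding FF_def FIs_def by auto
            have "m q + m' q = 0" using qF free_iff[OF mP m'P q1(1)] unfolding FF_def FIs_def by auto
            moreover have "l (j+1) + m (j+1) + m' (j+1) \<le> l j + m j + m' j" using smono j by blast
            ultimately have "0 \<le> m j + m' j" using eq True by simp
            moreover have "m j = m' j" using nonfree_eq[OF mP m'P j1(1) nf] .
            ultimately have "m' j = 1/2" using PS_val[OF m'P j1(1)] by auto
            then show ?thesis unfolding star_eq using nf by simp
          qed
          then have "?D j = 1/2" using jq unfolding Deq by simp
          then show ?thesis using Dj eq by simp
        next
          case False
          have "?D (j+1) = ?S (j+1)" using False jn unfolding Deq by simp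
          also have "\<dots> \<le> ?S j"
          proof (rule star_mono[OF mP m'P])
            show "1 \<le> j" "j < n" "l j = l (j+1)" using j eq by auto
            show "m (j + 1) + m' (j + 1) \<le> m j + m' j" using smono j eq by fastforce
            show "m (j + 1) \<le> m j" using lm j eq unfolding Pplus_def by fastforce
          qed
          also have "\<dots> \<le> ?D j" using Sval[OF j1(1)] unfolding Deq by auto
          finally show ?thesis using eq by simp
        qed
      qed
    qed
    have "?D n = 1/2" using q1 unfolding Deq by simp
    then have la: "(l + ?D) (n-1) + (l + ?D) n \<ge> 0" using l0 Dval[OF n1(1)] by auto
    show ?thesis unfolding Pplus_def using w h d mo la by blast
  qed
  have "admissible n l ?D ?Dm"
    unfolding admissible_def sumeq using lD DP DmP goal1 lmm by blast
  then show ?thesis using goal1 by blast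
qed

end
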